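(* Consider a feedforward neural network viewed as a directed acyclic graph with random edge weights, satisfying hypotheses (H1)–(H5) below. For a path ${\bm p}$ starting at an input node, let $\tilde{\bm p}$ be the path without its input node, let $w_p$ denote the weight of the edge of ${\bm p}$ entering node $p$, and let $\omega_{\bm p}=\prod_{p\in\tilde{\bm p}}w_p$ be the path-product. Then for two distinct paths ${\bm p},{\bm p}'$ starting from a same input node, $$\mathbb E_W[\omega_{\bm p}\omega_{{\bm p}'}]=0\quad\text{and}\quad \mathbb E_W[\omega_{\bm p}^2]=\prod_{p\in\tilde{\bm p}}\mathbb E_W[w_p^2].$$ Furthermore, if there is at least one non-average-pooling weight on path ${\bm p}$, then $\mathbb E_W[\omega_{\bm p}]=0$.
   Context: $\mathbb E_W$ denotes expectation over the weights. Hypotheses: (H1) every non-input neuron is followed by a ReLU which kills half of its inputs, independently of the weights; (H2) the neurons are partitioned into layers, meaning groups that each path traverses at most once; (H3) all (non-average-pooling) weights have expectation $0$ and variance $2/(\text{in-degree})$; (H4) weights from different layers are independent; (H5) two distinct weights $w,w'$ from a same node satisfy $\mathbb E[ww']=0$. "Weights" may also include deterministic average-pooling weights, equal to $1/(\text{in-degree})$ of the average-pooling node. *)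

theory Defs
  imports "HOL-Probability.Probability"
begin

definition dag_path :: "('v \<times> 'v) set \<Rightarrow> 'v list \<Rightarrow> bool" where
  "dag_path E ps \<longleftrightarrow> ps \<noteq> [] \<and> successively (\<lambda>a b. (a, b) \<in> E) ps"

definition input_node :: "('v \<times> 'v) set \<Rightarrow> 'v \<Rightarrow> bool" where
  "input_node E v \<longleftrightarrow> (\<forall>u. (u, v) \<notin> E)"

definition output_node :: "('v \<times> 'v) set \<Rightarrow> 'v \<Rightarrow> bool" where
  "output_node E v \<longleftrightarrow> (\<forall>u. (v, u) \<notin> E)"

definition indeg :: "('v \<times> 'v) set \<Rightarrow> 'v \<Rightarrow> nat" where
  "indeg E v = card {u. (u, v) \<in> E}"

definition path_edges :: "'v list \<Rightarrow> ('v \<times> 'v) list" where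
  "path_edges ps = zip ps (tl ps)"

text \<open>Path product omega_p = product over the nodes p of the path (input node removed)
  of the weight w_p of the edge entering p.\<close>
definition path_prod :: "('v \<times> 'v \<Rightarrow> 'a \<Rightarrow> real) \<Rightarrow> 'v list \<Rightarrow> 'a \<Rightarrow> real" where
  "path_prod W ps x = prod_list (map (\<lambda>e. W e x) (path_edges ps))"

definition layer_edges :: "('v \<times> 'v) set \<Rightarrow> ('v \<Rightarrow> 'l) \<Rightarrow> 'l \<Rightarrow> ('v \<times> 'v) set" where
  "layer_edges E layer l = {e \<in> E. layer (fst e) = l}"

end

theory Submission
  imports Defs
begin

lemma group_prod:
  fixes f :: "'e \<Rightarrow> 'b::comm_monoid_mult"
  assumes "finite L" "\<forall>e\<in>set es. g e \<in> L"
  shows "prod_list (map f es) = (\<Prod>l\<in>L. prod_list (map f (filter (\<lambda>e. g e = l) es)))"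
  using assms(2)
proof (induction es)
  case Nil then show ?case by simp
next
  case (Cons a es)
  have "(\<Prod>l\<in>L. prod_list (map f (filter (\<lambda>e. g e = l) (a # es))))
      = (\<Prod>l\<in>L. (if g a = l then f a else 1) * prod_list (map f (filter (\<lambda>e. g e = l) es)))"
    by (intro prod.cong) auto
  also have "\<dots> = (\<Prod>l\<in>L. (if g a = l then f a else 1)) * (\<Prod>l\<in>L. prod_list (map f (filter (\<lambda>e. g e = l) es)))"
    by (rule prod.distrib)
  also have "(\<Prod>l\<in>L. (if g a = l then f a else 1)) = f a"
    using Cons.prems assms(1) by (simp add: prod.delta)
  finally show ?case using Cons by simp
qed

lemma len1_single: "length xs \<le> 1 \<Longrightarrow> e \<in> set xs \<Longrightarrow> xs = [e]"
  by (cases xs) auto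

lemma len2_cases: "length xs \<le> 2 \<Longrightarrow> (xs = [] \<Longrightarrow> P) \<Longrightarrow> (\<And>a. xs = [a] \<Longrightarrow> P) \<Longrightarrow> (\<And>a b. xs = [a,b] \<Longrightarrow> P) \<Longrightarrow> P"
  by (metis (no_types) One_nat_def Suc_1 le_Suc_eq le_zero_eq length_0_conv length_Suc_conv)

lemma meas_prodlist:
  "set ds \<subseteq> A \<Longrightarrow> (\<lambda>z. prod_list (map (\<lambda>e. z e) ds) :: real) \<in> borel_measurable (PiM A (\<lambda>_. borel))"
proof (induction ds)
  case Nil then show ?case by simp
next
  case (Cons a ds)
  then have "(\<lambda>z. z a :: real) \<in> borel_measurable (PiM A (\<lambda>_. borel))"
    by (intro measurable_component_singleton) auto
  with Cons show ?case by simp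
qed

lemma dag_path_edges: "dag_path E ps \<Longrightarrow> set (path_edges ps) \<subseteq> E"
proof (induction ps rule: induct_list012)
  case (3 x y zs)
  then show ?case
    by (cases zs) (auto simp: dag_path_def path_edges_def)
qed (auto simp: dag_path_def path_edges_def)

lemma map_fst_edges: "map fst (path_edges ps) = butlast ps"
  by (simp add: path_edges_def map_fst_zip_take butlast_conv_take)

lemma filter_len1: "distinct (map g xs) \<Longrightarrow> length (filter (\<lambda>x. g x = l) xs) \<le> 1"
proof (induction xs)
  case (Cons a xs)
  then show ?case
    by (auto simp: filter_empty_conv) (metis image_eqI)
qed simp

lemma diverge:
  assumes "dag_path E xs" "dag_path E ys" "hd xs = hd ys" "xs \<noteq> ys"
    "output_node E (last xs)" "output_node E (last ys)"
  shows "\<exists>v u u'. (v,u) \<in> set (path_edges xs) \<and> (v,u') \<in> set (path_edges ys) \<and> u \<noteq> u'"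
  using assms
proof (induction xs arbitrary: ys rule: induct_list012)
  case 1 then show ?case by (simp add: dag_path_def)
next
  case (2 a)
  then obtain ys' where ys: "ys = a # ys'" by (cases ys) (auto simp: dag_path_def)
  with 2 obtain y ys'' where "ys' = y # ys''" by (cases ys') auto
  with ys 2 show ?case by (auto simp: dag_path_def output_node_def)
next
  case (3 a b xs)
  then obtain ys' where ys: "ys = a # ys'" by (cases ys) (auto simp: dag_path_def)
  show ?case
  proof (cases ys')
    case Nil
    with ys 3 show ?thesis by (auto simp: dag_path_def output_node_def)
  next
    case (Cons c ys'')
    show ?thesis
    proof (cases "b = c")
      case False
      then show ?thesis using ys Cons by (auto simp: path_edges_def)
    next
      case True
      have "\<exists>v u u'. (v,u) \<in> set (path_edges (b#xs)) \<and> (v,u') \<in> set (path_edges (c#ys'')) \<and> u \<noteq> u'"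
        apply (rule "3.IH"(2))
        using 3 ys Cons True by (auto simp: dag_path_def)
      then show ?thesis using ys Cons by (auto simp: path_edges_def)
    qed
  qed
qed

lemma absb: "\<bar>(a::real) * b\<bar> \<le> a\<^sup>2 + b\<^sup>2"
proof -
  have "0 \<le> (\<bar>a\<bar> - \<bar>b\<bar>)\<^sup>2" by simp
  then have h: "2 * (\<bar>a\<bar> * \<bar>b\<bar>) \<le> a\<^sup>2 + b\<^sup>2" by (simp add: power2_diff)
  have n: "0 \<le> \<bar>a\<bar> * \<bar>b\<bar>" by simp
  from h n have "\<bar>a\<bar> * \<bar>b\<bar> \<le> a\<^sup>2 + b\<^sup>2" by linarith
  then show ?thesis by (simp add: abs_mult)
qed

lemma (in prob_space) int_mult2:
  fixes f g :: "'a \<Rightarrow> real"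
  assumes "f \<in> borel_measurable M" "g \<in> borel_measurable M"
    "integrable M (\<lambda>x. (f x)\<^sup>2)" "integrable M (\<lambda>x. (g x)\<^sup>2)"
  shows "integrable M (\<lambda>x. f x * g x)"
proof (rule Bochner_Integration.integrable_bound)
  show "integrable M (\<lambda>x. (f x)\<^sup>2 + (g x)\<^sup>2)" using assms by auto
  show "(\<lambda>x. f x * g x) \<in> borel_measurable M" using assms by auto
  show "AE x in M. norm (f x * g x) \<le> norm ((f x)\<^sup>2 + (g x)\<^sup>2)"
  proof (rule AE_I2)
    fix x
    have "\<bar>f x * g x\<bar> \<le> (f x)\<^sup>2 + (g x)\<^sup>2"
      by (rule absb)
    then show "norm (f x * g x) \<le> norm ((f x)\<^sup>2 + (g x)\<^sup>2)" by simp
  qed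
qed

theorem lemma4:
  fixes M :: "'a measure"
    and E :: "('v::finite \<times> 'v) set"
    and layer :: "'v \<Rightarrow> 'l"
    and Pool :: "'v set"
    and W :: "'v \<times> 'v \<Rightarrow> 'a \<Rightarrow> real"
  assumes prob: "prob_space M"
    \<comment> \<open>(H2) every path traverses each layer at most once\<close>
    and H2: "\<And>ps. dag_path E ps \<Longrightarrow> distinct (map layer ps)"
    \<comment> \<open>average-pooling weights are deterministic, equal to 1/(in-degree)\<close>
    and pool: "\<And>u v x. (u, v) \<in> E \<Longrightarrow> v \<in> Pool \<Longrightarrow> x \<in> space M \<Longrightarrow>
                 W (u, v) x = 1 / real (indeg E v)"
    \<comment> \<open>(H3) non-average-pooling weights: mean 0, variance 2/(in-degree)\<close>
    and H3_meas: "\<And>u v. (u, v) \<in> E \<Longrightarrow> v \<notin> Pool \<Longrightarrow> W (u, v) \<in> borel_measurable M"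
    and H3_int: "\<And>u v. (u, v) \<in> E \<Longrightarrow> v \<notin> Pool \<Longrightarrow> integrable M (\<lambda>x. (W (u, v) x)\<^sup>2)"
    and H3_mean: "\<And>u v. (u, v) \<in> E \<Longrightarrow> v \<notin> Pool \<Longrightarrow> (\<integral>x. W (u, v) x \<partial>M) = 0"
    and H3_var: "\<And>u v. (u, v) \<in> E \<Longrightarrow> v \<notin> Pool \<Longrightarrow>
                   (\<integral>x. (W (u, v) x - (\<integral>y. W (u, v) y \<partial>M))\<^sup>2 \<partial>M) = 2 / real (indeg E v)"
    \<comment> \<open>(H4) weights from different layers are independent\<close>
    and H4: "prob_space.indep_vars M
               (\<lambda>l. PiM (layer_edges E layer l) (\<lambda>_. borel))
               (\<lambda>l x. restrict (\<lambda>e. W e x) (layer_edges E layer l)) UNIV"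
    \<comment> \<open>(H5) two distinct weights from a same node are uncorrelated\<close>
    and H5: "\<And>v u u'. (v, u) \<in> E \<Longrightarrow> (v, u') \<in> E \<Longrightarrow> u \<noteq> u' \<Longrightarrow>
               (\<integral>x. W (v, u) x * W (v, u') x \<partial>M) = 0"
  shows
    "(\<forall>ps ps'. dag_path E ps \<and> dag_path E ps' \<and> hd ps = hd ps' \<and> input_node E (hd ps)
        \<and> output_node E (last ps) \<and> output_node E (last ps') \<and> ps \<noteq> ps'
        \<longrightarrow> (\<integral>x. path_prod W ps x * path_prod W ps' x \<partial>M) = 0)
     \<and> (\<forall>ps. dag_path E ps \<and> input_node E (hd ps) \<longrightarrow>
        (\<integral>x. (path_prod W ps x)\<^sup>2 \<partial>M) =
          prod_list (map (\<lambda>e. \<integral>x. (W e x)\<^sup>2 \<partial>M) (path_edges ps)))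
     \<and> (\<forall>ps. dag_path E ps \<and> input_node E (hd ps)
        \<and> (\<exists>e \<in> set (path_edges ps). snd e \<notin> Pool)
        \<longrightarrow> (\<integral>x. path_prod W ps x \<partial>M) = 0)"
proof -
  interpret prob_space M by (rule prob)
  let ?P = "\<lambda>l (e::'v\<times>'v). layer (fst e) = l"
  have wmeas: "W e \<in> borel_measurable M" if "e \<in> E" for e
  proof (cases "snd e \<in> Pool")
    case True
    then have "W e \<in> borel_measurable M \<longleftrightarrow> (\<lambda>x. 1 / real (indeg E (snd e))) \<in> borel_measurable M"
      using that pool by (intro measurable_cong) (cases e, auto)
    then show ?thesis by simp
  next
    case False then show ?thesis using that H3_meas by (cases e) auto
  qed
  have wsq: "integrable M (\<lambda>x. (W e x)\<^sup>2)" if "e \<in> E" for e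
  proof (cases "snd e \<in> Pool")
    case True
    have "integrable M (\<lambda>x. (1 / real (indeg E (snd e)))\<^sup>2)" by simp
    moreover obtain a b where ab: "e = (a, b)" by (cases e)
    ultimately show ?thesis
      using that True pool[of a b]
      by (subst Bochner_Integration.integrable_cong[OF refl, where g="\<lambda>x. (1 / real (indeg E (snd e)))\<^sup>2"]) auto
  next
    case False then show ?thesis using that H3_int by (cases e) auto
  qed
  have w1: "integrable M (W e)" if "e \<in> E" for e
  proof -
    have "integrable M (\<lambda>x. W e x * 1)"
      by (rule int_mult2) (use wmeas wsq that in auto)
    then show ?thesis by simp
  qed
  have I2: "integrable M (\<lambda>x. prod_list (map (\<lambda>e. W e x) ds))"
    if "set ds \<subseteq> E" "length ds \<le> 2" for ds
  proof -
    consider "ds = []" | a where "ds = [a]" | a b where "ds = [a, b]"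
      using len2_cases[OF \<open>length ds \<le> 2\<close>] by blast
    then show ?thesis
    proof cases
      case 1 then show ?thesis by simp
    next
      case (2 a)
      then have "a \<in> E" using that by simp
      then have "integrable M (W a)" by (rule w1)
      then show ?thesis using 2 by simp
    next
      case (3 a b)
      then have ab: "a \<in> E" "b \<in> E" using that by auto
      have "integrable M (\<lambda>x. W a x * W b x)"
        by (rule int_mult2) (use ab wmeas wsq in auto)
      then show ?thesis using 3 by simp
    qed
  qed
  have A: "(\<integral>x. prod_list (map (\<lambda>e. W e x) es) \<partial>M) =
     (\<Prod>l\<in>(\<lambda>e. layer (fst e)) ` set es. \<integral>x. prod_list (map (\<lambda>e. W e x) (filter (?P l) es)) \<partial>M)"
    if es: "set es \<subseteq> E" and ints: "\<And>l. integrable M (\<lambda>x. prod_list (map (\<lambda>e. W e x) (filter (?P l) es)))"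
    for es
  proof -
    let ?L = "(\<lambda>e. layer (fst e)) ` set es"
    define G where "G l z = prod_list (map (\<lambda>e. z e) (filter (?P l) es))" for l and z :: "'v\<times>'v \<Rightarrow> real"
    have GX: "G l (restrict (\<lambda>e. W e x) (layer_edges E layer l)) = prod_list (map (\<lambda>e. W e x) (filter (?P l) es))" for l x
    proof -
      have mq: "map (\<lambda>e. restrict (\<lambda>e. W e x) (layer_edges E layer l) e) (filter (?P l) es)
          = map (\<lambda>e. W e x) (filter (?P l) es)"
        using es by (intro map_cong) (auto simp: layer_edges_def)
      show ?thesis unfolding G_def by (rule arg_cong[OF mq])
    qed
    have ind: "indep_vars (\<lambda>_. borel) (\<lambda>l x. G l (restrict (\<lambda>e. W e x) (layer_edges E layer l))) UNIV"
      apply (rule indep_vars_compose2[OF H4])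
      unfolding G_def using es by (intro meas_prodlist) (auto simp: layer_edges_def)
    have ind2: "indep_vars (\<lambda>_. borel) (\<lambda>l x. prod_list (map (\<lambda>e. W e x) (filter (?P l) es))) ?L"
      using indep_vars_subset[OF ind, of ?L] by (simp add: GX)
    have "(\<integral>x. prod_list (map (\<lambda>e. W e x) es) \<partial>M) =
        (\<integral>x. (\<Prod>l\<in>?L. prod_list (map (\<lambda>e. W e x) (filter (?P l) es))) \<partial>M)"
      by (subst group_prod[where L="?L" and g="\<lambda>e. layer (fst e)"]) auto
    also have "\<dots> = (\<Prod>l\<in>?L. \<integral>x. prod_list (map (\<lambda>e. W e x) (filter (?P l) es)) \<partial>M)"
      by (rule indep_vars_lebesgue_integral[OF _ ind2 ints]) auto
    finally show ?thesis .
  qed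
  have distl: "distinct (map (\<lambda>e. layer (fst e)) (path_edges ps))" if "dag_path E ps" for ps
  proof -
    have "map (\<lambda>e. layer (fst e)) (path_edges ps) = map layer (map fst (path_edges ps))" by simp
    also have "\<dots> = butlast (map layer ps)" by (simp add: map_fst_edges map_butlast)
    finally show ?thesis using H2[OF that] by (simp add: distinct_butlast)
  qed
  have flen: "length (filter (?P l) (path_edges ps)) \<le> 1" if "dag_path E ps" for ps l
    using filter_len1[OF distl[OF that]] by simp
  have fone: "filter (?P (layer (fst e))) (path_edges ps) = [e]" if "dag_path E ps" "e \<in> set (path_edges ps)" for ps e
  proof -
    have "e \<in> set (filter (?P (layer (fst e))) (path_edges ps))" using that by simp
    moreover have "length (filter (?P (layer (fst e))) (path_edges ps)) \<le> 1" by (rule flen[OF that(1)])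
    ultimately show ?thesis by (rule len1_single[rotated])
  qed
  have part1: "(\<integral>x. path_prod W ps x * path_prod W ps' x \<partial>M) = 0"
    if "dag_path E ps" "dag_path E ps'" "hd ps = hd ps'" "output_node E (last ps)"
       "output_node E (last ps')" "ps \<noteq> ps'" for ps ps'
  proof -
    note hyp = that
    let ?es = "path_edges ps @ path_edges ps'"
    obtain v u u' where vu: "(v,u) \<in> set (path_edges ps)" "(v,u') \<in> set (path_edges ps')" "u \<noteq> u'"
      using diverge[OF hyp(1,2,3,6,4,5)] by blast
    have es: "set ?es \<subseteq> E" using dag_path_edges that(1,2) by auto
    have ints: "integrable M (\<lambda>x. prod_list (map (\<lambda>e. W e x) (filter (?P l) ?es)))" for l
      apply (rule I2)
      using es flen[OF that(1), of l] flen[OF that(2), of l] by auto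
    have "(\<integral>x. path_prod W ps x * path_prod W ps' x \<partial>M) = (\<integral>x. prod_list (map (\<lambda>e. W e x) ?es) \<partial>M)"
      by (simp add: path_prod_def)
    also have "\<dots> = (\<Prod>l\<in>(\<lambda>e. layer (fst e)) ` set ?es. \<integral>x. prod_list (map (\<lambda>e. W e x) (filter (?P l) ?es)) \<partial>M)"
      by (rule A[OF es ints])
    also have "\<dots> = 0"
    proof (rule prod_zero)
      show "finite ((\<lambda>e. layer (fst e)) ` set ?es)" by simp
      have "filter (?P (layer v)) ?es = [(v,u),(v,u')]"
        using fone[OF that(1) vu(1)] fone[OF that(2) vu(2)] by simp
      then have "(\<integral>x. prod_list (map (\<lambda>e. W e x) (filter (?P (layer v)) ?es)) \<partial>M) = 0"
        using H5[of v u u'] vu es by auto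
      moreover have "layer v \<in> (\<lambda>e. layer (fst e)) ` set ?es" using vu by force
      ultimately show "\<exists>l\<in>(\<lambda>e. layer (fst e)) ` set ?es. (\<integral>x. prod_list (map (\<lambda>e. W e x) (filter (?P l) ?es)) \<partial>M) = 0"
        by blast
    qed
    finally show ?thesis .
  qed
  have conv: "(\<Prod>l\<in>(\<lambda>e. layer (fst e)) ` set (path_edges ps). h (filter (?P l) (path_edges ps)))
      = prod_list (map (\<lambda>e. h [e]) (path_edges ps))" if "dag_path E ps" for ps h
  proof -
    have inj: "inj_on (\<lambda>e. layer (fst e)) (set (path_edges ps))"
      using distl[OF that] by (simp add: distinct_map)
    have dpe: "distinct (path_edges ps)" using distl[OF that] by (simp add: distinct_map)
    have "(\<Prod>l\<in>(\<lambda>e. layer (fst e)) ` set (path_edges ps). h (filter (?P l) (path_edges ps)))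
        = (\<Prod>e\<in>set (path_edges ps). h (filter (?P (layer (fst e))) (path_edges ps)))"
      by (rule prod.reindex[OF inj, unfolded comp_def])
    also have "\<dots> = (\<Prod>e\<in>set (path_edges ps). h [e])"
      using fone[OF that] by (intro prod.cong) auto
    also have "\<dots> = prod_list (map (\<lambda>e. h [e]) (path_edges ps))"
      by (rule prod.distinct_set_conv_list[OF dpe])
    finally show ?thesis .
  qed
  have part2: "(\<integral>x. (path_prod W ps x)\<^sup>2 \<partial>M) = prod_list (map (\<lambda>e. \<integral>x. (W e x)\<^sup>2 \<partial>M) (path_edges ps))"
    if "dag_path E ps" for ps
  proof -
    let ?es = "path_edges ps @ path_edges ps"
    have es: "set ?es \<subseteq> E" using dag_path_edges that by auto
    have ints: "integrable M (\<lambda>x. prod_list (map (\<lambda>e. W e x) (filter (?P l) ?es)))" for l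
      apply (rule I2)
      using es flen[OF that, of l] by auto
    have "(\<integral>x. (path_prod W ps x)\<^sup>2 \<partial>M) = (\<integral>x. prod_list (map (\<lambda>e. W e x) ?es) \<partial>M)"
      by (simp add: path_prod_def power2_eq_square)
    also have "\<dots> = (\<Prod>l\<in>(\<lambda>e. layer (fst e)) ` set ?es. \<integral>x. prod_list (map (\<lambda>e. W e x) (filter (?P l) ?es)) \<partial>M)"
      by (rule A[OF es ints])
    also have "\<dots> = (\<Prod>l\<in>(\<lambda>e. layer (fst e)) ` set (path_edges ps).
        (\<lambda>ds. \<integral>x. prod_list (map (\<lambda>e. W e x) (ds @ ds)) \<partial>M) (filter (?P l) (path_edges ps)))"
      by simp
    also have "\<dots> = prod_list (map (\<lambda>e. \<integral>x. prod_list (map (\<lambda>e. W e x) ([e] @ [e])) \<partial>M) (path_edges ps))"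
      by (rule conv[OF that])
    also have "\<dots> = prod_list (map (\<lambda>e. \<integral>x. (W e x)\<^sup>2 \<partial>M) (path_edges ps))"
      by (simp add: power2_eq_square)
    finally show ?thesis .
  qed
  have part3: "(\<integral>x. path_prod W ps x \<partial>M) = 0"
    if "dag_path E ps" "\<exists>e \<in> set (path_edges ps). snd e \<notin> Pool" for ps
  proof -
    note hyp = that
    let ?es = "path_edges ps"
    have es: "set ?es \<subseteq> E" using dag_path_edges that by auto
    have ints: "integrable M (\<lambda>x. prod_list (map (\<lambda>e. W e x) (filter (?P l) ?es)))" for l
      apply (rule I2)
      using es flen[OF that(1), of l] by auto
    have "(\<integral>x. path_prod W ps x \<partial>M) = (\<integral>x. prod_list (map (\<lambda>e. W e x) ?es) \<partial>M)"
      by (simp add: path_prod_def)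
    also have "\<dots> = (\<Prod>l\<in>(\<lambda>e. layer (fst e)) ` set ?es. \<integral>x. prod_list (map (\<lambda>e. W e x) (filter (?P l) ?es)) \<partial>M)"
      by (rule A[OF es ints])
    also have "\<dots> = prod_list (map (\<lambda>e. \<integral>x. prod_list (map (\<lambda>e. W e x) [e]) \<partial>M) ?es)"
      by (rule conv[OF that(1)])
    also have "\<dots> = prod_list (map (\<lambda>e. \<integral>x. W e x \<partial>M) ?es)"
      by simp
    also have "\<dots> = 0"
    proof -
      obtain e where e: "e \<in> set ?es" "snd e \<notin> Pool" using hyp(2) by blast
      obtain a b where ab: "e = (a, b)" by (cases e)
      have "e \<in> E" using e es by auto
      then have "(\<integral>x. W e x \<partial>M) = 0" using H3_mean[of a b] e(2) ab by simp
      then have "0 \<in> set (map (\<lambda>e. \<integral>x. W e x \<partial>M) ?es)" using e by force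
      then show ?thesis by (simp add: prod_list_zero_iff)
    qed
    finally show ?thesis .
  qed
  show ?thesis using part1 part2 part3 by blast
qed

end
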